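(* Let $(U,\mathcal{I})$ be a downward-closed set system (with $U$ finite) that is not a matroid. Then there exist a set $V\subseteq U$ and an element $x\in V$ such that the revenue of the VCG mechanism on bid profile $\mathbb{1}[V\setminus\{x\}]$ exceeds the revenue of the VCG mechanism on bid profile $\mathbb{1}[V]$.
   Context: Bidders are the elements of $U$, and $\mathcal{I}$ is the feasibility constraint (sets of bidders that may simultaneously win). A set system with $\emptyset\in\mathcal{I}$ is downward-closed if subsets of members are members, and a matroid if moreover whenever $A,B\in\mathcal{I}$ with $|A|>|B|$ there is $x\in A\setminus B$ with $B\cup\{x\}\in\mathcal{I}$. For $S\subseteq U$, $\mathbb{1}[S]$ denotes the bid profile in which each bidder in $S$ bids $1$ and each bidder in $U\setminus S$ bids $0$. The (single-parameter) VCG mechanism selects as winners a feasible set maximizing the total bid (with ties broken arbitrarily), and charges each winner its critical bid, i.e. the infimum of bids at which it would still belong to a maximum-total-bid feasible set with the other bids fixed (equivalently its VCG externality); losers pay $0$. Revenue is the sum of payments. *)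

theory Defs
  imports Complex_Main
begin

definition downward_closed :: "'a set \<Rightarrow> 'a set set \<Rightarrow> bool" where
  "downward_closed U I \<longleftrightarrow> I \<subseteq> Pow U \<and> {} \<in> I \<and> (\<forall>A\<in>I. \<forall>B. B \<subseteq> A \<longrightarrow> B \<in> I)"

definition is_matroid :: "'a set \<Rightarrow> 'a set set \<Rightarrow> bool" where
  "is_matroid U I \<longleftrightarrow> downward_closed U I \<and>
     (\<forall>A\<in>I. \<forall>B\<in>I. card A > card B \<longrightarrow> (\<exists>x\<in>A - B. insert x B \<in> I))"

definition unit_bids :: "'a set \<Rightarrow> 'a \<Rightarrow> real" where
  "unit_bids S = (\<lambda>i. if i \<in> S then 1 else 0)"

text \<open>W is a possible VCG winner set under bids b: a feasible set of maximum total bid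
  (any such set may be chosen; ties are broken arbitrarily).\<close>
definition vcg_alloc :: "'a set set \<Rightarrow> ('a \<Rightarrow> real) \<Rightarrow> 'a set \<Rightarrow> bool" where
  "vcg_alloc I b W \<longleftrightarrow> W \<in> I \<and> (\<forall>W'\<in>I. sum b W' \<le> sum b W)"

definition critical_bid :: "'a set set \<Rightarrow> ('a \<Rightarrow> real) \<Rightarrow> 'a \<Rightarrow> real" where
  "critical_bid I b i = Inf {t::real. 0 \<le> t \<and> (\<exists>W. vcg_alloc I (b(i := t)) W \<and> i \<in> W)}"

definition vcg_revenue :: "'a set set \<Rightarrow> ('a \<Rightarrow> real) \<Rightarrow> 'a set \<Rightarrow> real" where
  "vcg_revenue I b W = (\<Sum>i\<in>W. critical_bid I b i)"

end

theory Submission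
  imports Defs
begin

definition optw :: "'a set set \<Rightarrow> 'a set \<Rightarrow> 'a set \<Rightarrow> bool" where
 "optw I V W \<longleftrightarrow> W \<in> I \<and> (\<forall>S\<in>I. card (S \<inter> V) \<le> card (W \<inter> V))"

lemma dc_finite: "finite U \<Longrightarrow> downward_closed U I \<Longrightarrow> S \<in> I \<Longrightarrow> finite S"
  unfolding downward_closed_def by (meson PowD finite_subset subsetD)

lemma sum_ub: "finite S \<Longrightarrow> sum (unit_bids V) S = real (card (S \<inter> V))"
  by (simp add: unit_bids_def sum.If_cases Int_def)

lemma alloc_iff: assumes "finite U" "downward_closed U I"
  shows "vcg_alloc I (unit_bids V) W \<longleftrightarrow> optw I V W"
  using dc_finite[OF assms] by (auto simp: vcg_alloc_def optw_def sum_ub)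

lemma sum_upd: assumes "finite S" "i \<in> V"
  shows "sum ((unit_bids V)(i:=t)) S = real (card (S \<inter> V)) - (if i \<in> S then 1 - t else 0)"
proof (cases "i \<in> S")
  case True
  have "sum ((unit_bids V)(i:=t)) S = ((unit_bids V)(i:=t)) i + sum ((unit_bids V)(i:=t)) (S - {i})"
    by (rule sum.remove[OF assms(1) True])
  also have "((unit_bids V)(i:=t)) i = t" by simp
  also have "sum ((unit_bids V)(i:=t)) (S - {i}) = sum (unit_bids V) (S - {i})"
    by (rule sum.cong) auto
  also have "\<dots> = real (card ((S - {i}) \<inter> V))" using assms by (simp add: sum_ub)
  also have "card ((S - {i}) \<inter> V) = card (S \<inter> V) - 1"
  proof -
    have "(S - {i}) \<inter> V = (S \<inter> V) - {i}" by blast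
    then show ?thesis using True assms by (simp add: card_Diff_singleton)
  qed
  finally have eq: "sum ((unit_bids V)(i:=t)) S = t + real (card (S \<inter> V) - 1)" .
  have c1: "card (S \<inter> V) \<ge> 1" using True assms
    by (metis IntI card_0_eq finite_Int empty_iff less_one not_le)
  show ?thesis unfolding eq using True c1 by (simp add: of_nat_diff)
next
  case False
  have "sum ((unit_bids V)(i:=t)) S = sum (unit_bids V) S" by (rule sum.cong) (use False in auto)
  then show ?thesis using False assms by (simp add: sum_ub)
qed

lemma crit:
  assumes U: "finite U" "downward_closed U I" and W: "optw I V W" "i \<in> W"
  shows "critical_bid I (unit_bids V) i = (if i \<in> V \<and> (\<exists>S. optw I V S \<and> i \<notin> S) then 1 else 0)"
proof -
  note fin = dc_finite[OF U]
  define T where "T = {t::real. 0 \<le> t \<and> (\<exists>W. vcg_alloc I ((unit_bids V)(i := t)) W \<and> i \<in> W)}"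
  have cb: "critical_bid I (unit_bids V) i = Inf T" unfolding critical_bid_def T_def ..
  have Wa: "vcg_alloc I (unit_bids V) W" using alloc_iff[OF U] W by simp
  show ?thesis
  proof (cases "i \<in> V")
    case False
    have "(unit_bids V)(i := 0) = unit_bids V" using False by (auto simp: unit_bids_def)
    then have "0 \<in> T" unfolding T_def using Wa W by auto
    then have "Inf T = 0" by (intro cInf_eq_minimum) (auto simp: T_def)
    then show ?thesis using cb False by simp
  next
    case iV: True
    show ?thesis
    proof (cases "\<exists>S. optw I V S \<and> i \<notin> S")
      case True
      then obtain S where S: "optw I V S" "i \<notin> S" by blast
      have "(unit_bids V)(i := 1) = unit_bids V" using iV by (auto simp: unit_bids_def)
      then have "1 \<in> T" unfolding T_def using Wa W by auto
      moreover have "1 \<le> t" if "t \<in> T" for t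
      proof (rule ccontr)
        assume "\<not> 1 \<le> t"
        from that obtain W' where W': "vcg_alloc I ((unit_bids V)(i := t)) W'" "i \<in> W'"
          unfolding T_def by blast
        have "S \<in> I" "W' \<in> I" using S W' by (auto simp: optw_def vcg_alloc_def)
        have "sum ((unit_bids V)(i := t)) S \<le> sum ((unit_bids V)(i := t)) W'"
          using W' \<open>S \<in> I\<close> by (auto simp: vcg_alloc_def)
        moreover have "sum ((unit_bids V)(i := t)) S = real (card (S \<inter> V))"
          using sum_upd[OF fin[OF \<open>S \<in> I\<close>] iV] S by simp
        moreover have "sum ((unit_bids V)(i := t)) W' = real (card (W' \<inter> V)) - (1 - t)"
          using sum_upd[OF fin[OF \<open>W' \<in> I\<close>] iV] W' by simp
        moreover have "card (W' \<inter> V) \<le> card (S \<inter> V)" using S \<open>W' \<in> I\<close> by (auto simp: optw_def)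
        ultimately show False using \<open>\<not> 1 \<le> t\<close> by linarith
      qed
      ultimately have "Inf T = 1" by (intro cInf_eq_minimum)
      then show ?thesis using cb iV True by simp
    next
      case False
      have WI: "W \<in> I" using W by (auto simp: optw_def)
      have "vcg_alloc I ((unit_bids V)(i := 0)) W"
        unfolding vcg_alloc_def
      proof (intro conjI ballI WI)
        fix S assume SI: "S \<in> I"
        have sW: "sum ((unit_bids V)(i := 0)) W = real (card (W \<inter> V)) - 1"
          using sum_upd[OF fin[OF WI] iV] W by simp
        have le: "card (S \<inter> V) \<le> card (W \<inter> V)" using W SI by (auto simp: optw_def)
        show "sum ((unit_bids V)(i := 0)) S \<le> sum ((unit_bids V)(i := 0)) W"
        proof (cases "i \<in> S")
          case True
          then show ?thesis using sum_upd[OF fin[OF SI] iV, of 0] sW le by simp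
        next
          case iS: False
          have "card (S \<inter> V) \<noteq> card (W \<inter> V)"
          proof
            assume "card (S \<inter> V) = card (W \<inter> V)"
            then have "optw I V S" using W SI by (auto simp: optw_def)
            then show False using False iS by blast
          qed
          then show ?thesis using sum_upd[OF fin[OF SI] iV, of 0] sW le iS by simp
        qed
      qed
      then have "0 \<in> T" unfolding T_def using W by auto
      then have "Inf T = 0" by (intro cInf_eq_minimum) (auto simp: T_def)
      then show ?thesis using cb False by simp
    qed
  qed
qed

lemma revenue:
  assumes U: "finite U" "downward_closed U I" and W: "optw I V W"
  shows "vcg_revenue I (unit_bids V) W =
     real (card (W \<inter> V)) - real (card {i. i \<in> V \<and> (\<forall>S. optw I V S \<longrightarrow> i \<in> S)})"
proof -
  define E where "E = {i. i \<in> V \<and> (\<forall>S. optw I V S \<longrightarrow> i \<in> S)}"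
  have WI: "W \<in> I" using W by (auto simp: optw_def)
  have finW: "finite W" using dc_finite[OF U WI] .
  have EW: "E \<subseteq> W \<inter> V" using W by (auto simp: E_def)
  have "vcg_revenue I (unit_bids V) W = (\<Sum>i\<in>W. if i \<in> W \<inter> V - E then 1 else 0)"
    unfolding vcg_revenue_def
    by (rule sum.cong) (auto simp: crit[OF U W] E_def)
  also have "\<dots> = real (card (W \<inter> (W \<inter> V - E)))"
    using sum_ub[OF finW, of "W \<inter> V - E"] unfolding unit_bids_def by simp
  also have "W \<inter> (W \<inter> V - E) = W \<inter> V - E" by blast
  also have "card (W \<inter> V - E) = card (W \<inter> V) - card E"
    using EW finW by (meson card_Diff_subset finite_Int finite_subset)
  finally show ?thesis using EW finW card_mono[of "W \<inter> V" E]
    unfolding E_def[symmetric] by (simp add: of_nat_diff)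
qed

theorem mainTheorem8:
  fixes U :: "'a set" and I :: "'a set set"
  assumes "finite U"
    and "downward_closed U I"
    and "\<not> is_matroid U I"
  shows "\<exists>V x. V \<subseteq> U \<and> x \<in> V \<and>
           (\<forall>W1 W2. vcg_alloc I (unit_bids (V - {x})) W1 \<longrightarrow> vcg_alloc I (unit_bids V) W2 \<longrightarrow>
              vcg_revenue I (unit_bids (V - {x})) W1 > vcg_revenue I (unit_bids V) W2)"
proof -
  note U = assms(1,2)
  note fin = dc_finite[OF U]
  have IU: "\<And>S. S \<in> I \<Longrightarrow> S \<subseteq> U" using assms(2) by (auto simp: downward_closed_def)
  have dc: "\<And>S T. S \<in> I \<Longrightarrow> T \<subseteq> S \<Longrightarrow> T \<in> I" using assms(2) by (auto simp: downward_closed_def)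
  define bad where "bad V \<longleftrightarrow> V \<subseteq> U \<and> (\<exists>A B. A \<in> I \<and> B \<in> I \<and> A \<subseteq> V \<and> B \<subseteq> V \<and> card B < card A \<and> (\<forall>y\<in>V-B. insert y B \<notin> I))" for V
  from assms(3) obtain A0 B0 where AB0: "A0\<in>I" "B0\<in>I" "card B0 < card A0" "\<forall>x\<in>A0-B0. insert x B0 \<notin> I"
    unfolding is_matroid_def using assms(2) by auto
  then have "bad (A0 \<union> B0)" unfolding bad_def using IU
    by (intro conjI exI[of _ A0] exI[of _ B0]) auto
  then obtain V where bV: "bad V" and minV: "\<forall>V'. bad V' \<longrightarrow> card V \<le> card V'"
    using ex_has_least_nat[of bad _ card] by blast
  from bV obtain A1 B where VU: "V \<subseteq> U" and A1: "A1 \<in> I" "A1 \<subseteq> V" and B: "B \<in> I" "B \<subseteq> V"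
     "card B < card A1" "\<forall>y\<in>V-B. insert y B \<notin> I"
    unfolding bad_def by blast
  have finV: "finite V" using VU assms(1) finite_subset by blast
  have bnd: "\<forall>S. S \<in> I \<and> S \<subseteq> V \<longrightarrow> card S < Suc (card V)"
    using finV by (simp add: card_mono le_imp_less_Suc)
  obtain A where A: "A \<in> I" "A \<subseteq> V" and Amax: "\<forall>S. S \<in> I \<and> S \<subseteq> V \<longrightarrow> card S \<le> card A"
    using Lattices_Big.ex_has_greatest_nat[of "\<lambda>S. S\<in>I \<and> S\<subseteq>V" A1 card "Suc (card V)", OF _ bnd] A1
    by blast
  have cBA: "card B < card A" using Amax A1 B by force
  have finA: "finite A" using fin A by blast
  have finB: "finite B" using fin B by blast
  have key: "card (S \<inter> (V - {z})) \<le> card B" if z: "z \<in> A - B" and SI: "S \<in> I" for z S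
  proof (rule ccontr)
    assume "\<not> card (S \<inter> (V - {z})) \<le> card B"
    then have "bad (V - {z})" unfolding bad_def using VU dc[OF SI] B z
      by (intro conjI exI[of _ "S \<inter> (V - {z})"] exI[of _ B]) auto
    moreover have "card (V - {z}) < card V" using z A finV by (meson DiffD1 card_Diff1_less subsetD)
    ultimately show False using minV by fastforce
  qed
  have BA: "\<not> B \<subseteq> A"
  proof
    assume BA: "B \<subseteq> A"
    have "A - B \<noteq> {}"
    proof
      assume "A - B = {}"
      then have "A \<subseteq> B" by blast
      then have "card A \<le> card B" using card_mono finB by blast
      then show False using cBA by simp
    qed
    then obtain z where z: "z \<in> A - B" by blast
    have "insert z B \<in> I" using dc[OF A(1)] z BA by auto
    then show False using B(4) z A by auto
  qed
  have "card (A \<inter> B) < card B" using BA finB by (intro psubset_card_mono finB) blast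
  moreover have "card (A - B) = card A - card (A \<inter> B)" using finA by (simp add: card_Diff_subset_Int)
  ultimately have cAB: "card (A - B) \<ge> 2" using cBA by linarith
  then have "A - B \<noteq> {}" by (metis card.empty not_numeral_le_zero)
  then obtain x where x: "x \<in> A - B" by blast
  have "card (A - B - {x}) \<ge> 1" using cAB x finA by (simp add: card_Diff_singleton)
  then have "A - B - {x} \<noteq> {}" by (metis card.empty not_one_le_zero)
  then obtain y where y: "y \<in> A - B" "y \<noteq> x" by blast
  have optA: "optw I V A" unfolding optw_def
  proof (intro conjI ballI A(1))
    fix S assume "S \<in> I"
    then have "S \<inter> V \<in> I" using dc by blast
    then have "card (S \<inter> V) \<le> card A" using Amax by blast
    then show "card (S \<inter> V) \<le> card (A \<inter> V)" using A(2) by (simp add: Int_absorb2)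
  qed
  have ess: "z \<in> S" if z: "z \<in> A - B" and S: "optw I V S" for z S
  proof (rule ccontr)
    assume "z \<notin> S"
    then have "S \<inter> (V - {z}) = S \<inter> V" by blast
    moreover have "card (A \<inter> V) \<le> card (S \<inter> V)" using S A by (auto simp: optw_def)
    moreover have "S \<in> I" using S by (simp add: optw_def)
    then have "card (S \<inter> (V - {z})) \<le> card B" using key[OF z] by blast
    moreover have "A \<inter> V = A" using A(2) by blast
    ultimately show False using cBA by simp
  qed
  have optB: "optw I (V - {x}) B" unfolding optw_def
  proof (intro conjI ballI B(1))
    fix S assume "S \<in> I"
    then show "card (S \<inter> (V - {x})) \<le> card (B \<inter> (V - {x}))"
    proof -
      have "B \<inter> (V - {x}) = B" using B(2) x by blast
      then show ?thesis using key[OF x \<open>S \<in> I\<close>] by simp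
    qed
  qed
  define E where "E = {i. i \<in> V \<and> (\<forall>S. optw I V S \<longrightarrow> i \<in> S)}"
  define E' where "E' = {i. i \<in> V - {x} \<and> (\<forall>S. optw I (V - {x}) S \<longrightarrow> i \<in> S)}"
  have xE: "x \<in> E" unfolding E_def using ess[OF x] x A(2) by blast
  have yE: "y \<in> E" unfolding E_def using ess[OF y(1)] y A(2) by blast
  have E'E: "E' \<subseteq> E - {x, y}"
  proof
    fix i assume i: "i \<in> E'"
    have "i \<noteq> y" using i optB y unfolding E'_def by blast
    moreover have "i \<in> S" if S: "optw I V S" for S
    proof -
      have xS: "x \<in> S" using ess[OF x S] .
      have SI: "S \<in> I" using S by (auto simp: optw_def)
      have c1: "card (A \<inter> V) \<le> card (S \<inter> V)" using S A by (auto simp: optw_def)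
      have "S \<inter> (V - {x}) = (S \<inter> V) - {x}" by blast
      then have c2: "card (S \<inter> (V - {x})) = card (S \<inter> V) - 1"
        using xS x A(2) fin[OF SI] by (auto simp: card_Diff_singleton)
      have "optw I (V - {x}) S" unfolding optw_def
      proof (intro conjI ballI SI)
        fix S' assume "S' \<in> I"
        then have "card (S' \<inter> (V - {x})) \<le> card B" by (rule key[OF x])
        moreover have "A \<inter> V = A" using A(2) by blast
        ultimately show "card (S' \<inter> (V - {x})) \<le> card (S \<inter> (V - {x}))"
          using c1 c2 cBA by simp
      qed
      then show ?thesis using i by (auto simp: E'_def)
    qed
    ultimately show "i \<in> E - {x, y}" using i by (auto simp: E_def E'_def)
  qed
  have finE: "finite E" using finV by (auto simp: E_def)
  have "card E' \<le> card (E - {x, y})" using E'E finE by (simp add: card_mono)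
  also have "card (E - {x, y}) = card E - 2" using xE yE y finE by (simp add: card_Diff_subset)
  finally have cE0: "card E' \<le> card E - 2" .
  have "card {x, y} \<le> card E" using xE yE finE by (intro card_mono) auto
  moreover have "card {x, y} = 2" using y by simp
  ultimately have cE: "card E' + 2 \<le> card E" using cE0 by linarith
  show ?thesis
  proof (intro exI conjI allI impI)
    show "V \<subseteq> U" by (rule VU)
    show "x \<in> V" using x A by auto
    fix W1 W2
    assume W1: "vcg_alloc I (unit_bids (V - {x})) W1" and W2: "vcg_alloc I (unit_bids V) W2"
    have o1: "optw I (V - {x}) W1" using W1 alloc_iff[OF U] by blast
    have o2: "optw I V W2" using W2 alloc_iff[OF U] by blast
    have r1: "vcg_revenue I (unit_bids (V - {x})) W1 = real (card (W1 \<inter> (V - {x}))) - real (card E')"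
      using revenue[OF U o1] unfolding E'_def by simp
    have r2: "vcg_revenue I (unit_bids V) W2 = real (card (W2 \<inter> V)) - real (card E)"
      using revenue[OF U o2] unfolding E_def by simp
    have "W2 \<in> I" using o2 by (simp add: optw_def)
    then have "W2 \<inter> V \<in> I" using dc by blast
    then have "card (W2 \<inter> V) \<le> card A" using Amax by blast
    moreover have "card (A - {x}) \<le> card (W1 \<inter> (V - {x}))"
    proof -
      have "card (A \<inter> (V - {x})) \<le> card (W1 \<inter> (V - {x}))" using o1 A by (auto simp: optw_def)
      moreover have "A \<inter> (V - {x}) = A - {x}" using A by blast
      ultimately show ?thesis by simp
    qed
    moreover have "card (A - {x}) = card A - 1" using x finA by (simp add: card_Diff_singleton)
    moreover have "card A \<ge> 1" using cBA by linarith
    ultimately have N: "card (W2 \<inter> V) + card E' < card (W1 \<inter> (V - {x})) + card E"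
      using cE by arith
    then have "real (card (W2 \<inter> V)) + real (card E') < real (card (W1 \<inter> (V - {x}))) + real (card E)"
      by (metis of_nat_add of_nat_less_iff)
    then show "vcg_revenue I (unit_bids (V - {x})) W1 > vcg_revenue I (unit_bids V) W2"
      unfolding r1 r2 by linarith
  qed
qed

end
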